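(* Let $n_1,\dots,n_p\in\mathbb Z$ with exactly $k$ of the $n_i$ odd. Then, in Bipartite Influence, $$-k-4\leq Rs(S_{n_1}+\dots+S_{n_p})\leq Ls(S_{n_1}+\dots+S_{n_p})\leq k+4.$$
   Context: Bipartite Influence: on a bipartite graph with black and white vertices (edges between colours), isolated vertices are credited to the owner of their colour (black to Left, white to Right); Left picks a black vertex $x$ and removes $x$, its neighbours and the vertices that become isolated (credited to her); Right likewise with white vertices; score = Left's total minus Right's; $Ls$, $Rs$ are the optimal scores when Left, resp. Right, moves first. The sum $+$ of positions is their disjoint union. Segments: for $n\geq 1$, $S_n$ is the path $v_1\cdots v_n$ with $v_i$ black iff $i$ odd; $S_{-n}$ is the path $v_1\cdots v_n$ with $v_i$ white iff $i$ odd; $S_0$ is the empty graph. *)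

theory Defs
  imports Main
begin

record 'a bgraph =
  verts :: "'a set"
  blk   :: "'a \<Rightarrow> bool"
  adj   :: "'a \<Rightarrow> 'a \<Rightarrow> bool"

definition isolated :: "'a bgraph \<Rightarrow> 'a set \<Rightarrow> 'a \<Rightarrow> bool" where
  "isolated G U v \<longleftrightarrow> (\<forall>w\<in>U. \<not> adj G v w)"

definition nbhd :: "'a bgraph \<Rightarrow> 'a set \<Rightarrow> 'a \<Rightarrow> 'a set" where
  "nbhd G U x = {y \<in> U. y = x \<or> adj G x y}"

text \<open>Vertices removed (and credited to the mover) when x is played in U:
  x, its neighbours, and the vertices that become isolated.\<close>
definition removed :: "'a bgraph \<Rightarrow> 'a set \<Rightarrow> 'a \<Rightarrow> 'a set" where
  "removed G U x = nbhd G U x \<union> {v \<in> U - nbhd G U x. isolated G (U - nbhd G U x) v}"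

text \<open>Non-isolated part of U and the credit of the isolated vertices (black to Left,
  white to Right).\<close>
definition core :: "'a bgraph \<Rightarrow> 'a set \<Rightarrow> 'a set" where
  "core G U = {v \<in> U. \<not> isolated G U v}"

definition credit :: "'a bgraph \<Rightarrow> 'a set \<Rightarrow> int" where
  "credit G U = int (card {v \<in> U. isolated G U v \<and> blk G v})
              - int (card {v \<in> U. isolated G U v \<and> \<not> blk G v})"

text \<open>Optimal remaining score (Left minus Right) with Left (gL) resp. Right (gR) to move,
  on a position U without isolated vertices; the nat argument is fuel (card U suffices,
  every move removes at least one vertex).\<close>
fun gL :: "'a bgraph \<Rightarrow> nat \<Rightarrow> 'a set \<Rightarrow> int"
and gR :: "'a bgraph \<Rightarrow> nat \<Rightarrow> 'a set \<Rightarrow> int" where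
  "gL G 0 U = 0"
| "gL G (Suc n) U =
     (if \<exists>x\<in>U. blk G x
      then Max ((\<lambda>x. int (card (removed G U x)) + gR G n (U - removed G U x))
                 ` {x \<in> U. blk G x})
      else 0)"
| "gR G 0 U = 0"
| "gR G (Suc n) U =
     (if \<exists>y\<in>U. \<not> blk G y
      then Min ((\<lambda>y. - int (card (removed G U y)) + gL G n (U - removed G U y))
                 ` {y \<in> U. \<not> blk G y})
      else 0)"

definition Ls :: "'a bgraph \<Rightarrow> int" where
  "Ls G = credit G (verts G) + gL G (card (verts G)) (core G (verts G))"

definition Rs :: "'a bgraph \<Rightarrow> int" where
  "Rs G = credit G (verts G) + gR G (card (verts G)) (core G (verts G))"

text \<open>Segment S_n on vertices 1..|n|: for n \<ge> 1 vertex i is black iff i odd,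
  for n \<le> -1 vertex i is white iff i odd; S_0 is empty.\<close>
definition segment :: "int \<Rightarrow> nat bgraph" where
  "segment n = \<lparr> verts = {1..nat \<bar>n\<bar>},
                 blk = (\<lambda>i. if n \<ge> 0 then odd i else even i),
                 adj = (\<lambda>i j. i \<in> {1..nat \<bar>n\<bar>} \<and> j \<in> {1..nat \<bar>n\<bar>} \<and> (j = i + 1 \<or> i = j + 1)) \<rparr>"

definition gsum :: "'a bgraph list \<Rightarrow> (nat \<times> 'a) bgraph" where
  "gsum Gs = \<lparr> verts = {(i, v). i < length Gs \<and> v \<in> verts (Gs ! i)},
               blk = (\<lambda>(i, v). blk (Gs ! i) v),
               adj = (\<lambda>(i, v) (j, w). i = j \<and> i < length Gs \<and> adj (Gs ! i) v w) \<rparr>"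

end

theory Submission
  imports Defs
begin

definition mv :: "'a bgraph \<Rightarrow> 'a set \<Rightarrow> 'a \<Rightarrow> 'a set" where
  "mv G U x = U - removed G U x"

lemma removed_sub: "removed G U x \<subseteq> U"
  unfolding removed_def nbhd_def by auto

lemma removed_self: "x \<in> U \<Longrightarrow> x \<in> removed G U x"
  unfolding removed_def nbhd_def by auto

lemma mv_core: "mv G U x = core G (U - nbhd G U x)"
  unfolding mv_def removed_def core_def nbhd_def by auto

lemma mv_sub: "mv G U x \<subseteq> U"
  unfolding mv_def by auto

lemma finite_mv: "finite U \<Longrightarrow> finite (mv G U x)"
  by (rule finite_subset[OF mv_sub])

lemma card_mv_less: "finite U \<Longrightarrow> x \<in> U \<Longrightarrow> card (mv G U x) < card U"
  unfolding mv_def using removed_self[of x U G]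
  by (intro psubset_card_mono) auto

lemma crem: "finite U \<Longrightarrow> int (card (removed G U x)) = int (card U) - int (card (mv G U x))"
  unfolding mv_def using removed_sub[of G U x]
  by (simp add: card_Diff_subset finite_subset card_mono of_nat_diff)

lemma fuel_eq:
  assumes "finite U" "card U \<le> n1" "card U \<le> n2"
  shows "gL G n1 U = gL G n2 U \<and> gR G n1 U = gR G n2 U"
  using assms
proof (induction n1 arbitrary: n2 U)
  case 0
  then have "U = {}" by auto
  then show ?case by (cases n2) auto
next
  case (Suc n1)
  show ?case
  proof (cases "U = {}")
    case True then show ?thesis by (cases n2) auto
  next
    case False
    then have "card U > 0" using Suc.prems by auto
    then obtain m where m: "n2 = Suc m" using Suc.prems by (cases n2) auto
    have IH: "gR G n1 (U - removed G U x) = gR G m (U - removed G U x) \<and>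
              gL G n1 (U - removed G U x) = gL G m (U - removed G U x)" if "x \<in> U" for x
    proof -
      have "card (U - removed G U x) < card U"
        using card_mv_less[OF Suc.prems(1) that] unfolding mv_def .
      then show ?thesis using Suc.IH[of "U - removed G U x" m] Suc.prems m by auto
    qed
    have e1: "(\<lambda>x. int (card (removed G U x)) + gR G n1 (U - removed G U x)) ` {x \<in> U. blk G x}
       = (\<lambda>x. int (card (removed G U x)) + gR G m (U - removed G U x)) ` {x \<in> U. blk G x}"
      by (rule image_cong) (auto simp: IH)
    have e2: "(\<lambda>x. - int (card (removed G U x)) + gL G n1 (U - removed G U x)) ` {x \<in> U. \<not> blk G x}
       = (\<lambda>x. - int (card (removed G U x)) + gL G m (U - removed G U x)) ` {x \<in> U. \<not> blk G x}"
      by (rule image_cong) (auto simp: IH)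
    show ?thesis using m e1 e2 by (simp del: gL.simps gR.simps add: gL.simps(2) gR.simps(2))
  qed
qed

definition GL where "GL G U = gL G (card U) U"
definition GR where "GR G U = gR G (card U) U"

lemma GL_eq: assumes "finite U"
  shows "GL G U = (if \<exists>x\<in>U. blk G x then Max ((\<lambda>x. int (card (removed G U x)) + GR G (mv G U x)) ` {x\<in>U. blk G x}) else 0)"
proof (cases "\<exists>x\<in>U. blk G x")
  case True
  then have "card U > 0" using assms card_gt_0_iff by blast
  then obtain m where m: "card U = Suc m" by (cases "card U") auto
  have "gR G m (mv G U x) = GR G (mv G U x)" if "x \<in> U" for x
    using fuel_eq[of "mv G U x" m "card (mv G U x)" G] card_mv_less[OF assms that, of G] m assms
    unfolding GR_def by (auto intro: finite_subset[OF mv_sub])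
  then have "(\<lambda>x. int (card (removed G U x)) + gR G m (U - removed G U x)) ` {x \<in> U. blk G x}
     = (\<lambda>x. int (card (removed G U x)) + GR G (mv G U x)) ` {x \<in> U. blk G x}"
    unfolding mv_def by (intro image_cong) auto
  then show ?thesis using True m unfolding GL_def by simp
next
  case False
  then show ?thesis unfolding GL_def by (cases "card U") auto
qed

lemma GR_eq: assumes "finite U"
  shows "GR G U = (if \<exists>x\<in>U. \<not> blk G x then Min ((\<lambda>x. - int (card (removed G U x)) + GL G (mv G U x)) ` {x\<in>U. \<not> blk G x}) else 0)"
proof (cases "\<exists>x\<in>U. \<not> blk G x")
  case True
  then have "card U > 0" using assms card_gt_0_iff by blast
  then obtain m where m: "card U = Suc m" by (cases "card U") auto
  have "gL G m (mv G U x) = GL G (mv G U x)" if "x \<in> U" for x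
    using fuel_eq[of "mv G U x" m "card (mv G U x)" G] card_mv_less[OF assms that, of G] m assms
    unfolding GL_def by (auto intro: finite_subset[OF mv_sub])
  then have "(\<lambda>x. - int (card (removed G U x)) + gL G m (U - removed G U x)) ` {x \<in> U. \<not> blk G x}
     = (\<lambda>x. - int (card (removed G U x)) + GL G (mv G U x)) ` {x \<in> U. \<not> blk G x}"
    unfolding mv_def by (intro image_cong) auto
  then show ?thesis using True m unfolding GR_def by simp
next
  case False
  then show ?thesis unfolding GR_def by (cases "card U") auto
qed

lemma GL_ge: "finite U \<Longrightarrow> x \<in> U \<Longrightarrow> blk G x \<Longrightarrow>
   int (card (removed G U x)) + GR G (mv G U x) \<le> GL G U"
  by (subst GL_eq) (auto intro!: Max_ge)

lemma GL_attain: "finite U \<Longrightarrow> x \<in> U \<Longrightarrow> blk G x \<Longrightarrow>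
   \<exists>x'\<in>U. blk G x' \<and> GL G U = int (card (removed G U x')) + GR G (mv G U x')"
proof -
  assume a: "finite U" "x \<in> U" "blk G x"
  let ?A = "(\<lambda>x. int (card (removed G U x)) + GR G (mv G U x)) ` {x\<in>U. blk G x}"
  have "Max ?A \<in> ?A" using a by (intro Max_in) auto
  then show ?thesis using a by (subst GL_eq) auto
qed

lemma GL_noblk: "finite U \<Longrightarrow> \<not> (\<exists>x\<in>U. blk G x) \<Longrightarrow> GL G U = 0"
  by (subst GL_eq) auto

lemma GR_le: "finite U \<Longrightarrow> x \<in> U \<Longrightarrow> \<not> blk G x \<Longrightarrow>
   GR G U \<le> - int (card (removed G U x)) + GL G (mv G U x)"
  by (subst GR_eq) (auto intro!: Min_le)

lemma GR_attain: "finite U \<Longrightarrow> x \<in> U \<Longrightarrow> \<not> blk G x \<Longrightarrow>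
   \<exists>x'\<in>U. \<not> blk G x' \<and> GR G U = - int (card (removed G U x')) + GL G (mv G U x')"
proof -
  assume a: "finite U" "x \<in> U" "\<not> blk G x"
  let ?A = "(\<lambda>x. - int (card (removed G U x)) + GL G (mv G U x)) ` {x\<in>U. \<not> blk G x}"
  have "Min ?A \<in> ?A" using a by (intro Min_in) auto
  then show ?thesis using a by (subst GR_eq) auto
qed

lemma GR_nowht: "finite U \<Longrightarrow> \<not> (\<exists>x\<in>U. \<not> blk G x) \<Longrightarrow> GR G U = 0"
  by (subst GR_eq) auto

lemma GL_attainE: assumes "finite U" "x \<in> U" "blk G x"
  obtains x' where "x' \<in> U" "blk G x'" "GL G U = int (card (removed G U x')) + GR G (mv G U x')"
proof -
  have "\<exists>x'\<in>U. blk G x' \<and> GL G U = int (card (removed G U x')) + GR G (mv G U x')"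
    by (rule GL_attain[OF assms])
  then obtain x' where "x' \<in> U" "blk G x' \<and> GL G U = int (card (removed G U x')) + GR G (mv G U x')"
    by (rule bexE)
  then show ?thesis using that by (elim conjE)
qed

lemma GR_attainE: assumes "finite U" "x \<in> U" "\<not> blk G x"
  obtains x' where "x' \<in> U" "\<not> blk G x'" "GR G U = - int (card (removed G U x')) + GL G (mv G U x')"
proof -
  have "\<exists>x'\<in>U. \<not> blk G x' \<and> GR G U = - int (card (removed G U x')) + GL G (mv G U x')"
    by (rule GR_attain[OF assms])
  then obtain x' where "x' \<in> U" "\<not> blk G x' \<and> GR G U = - int (card (removed G U x')) + GL G (mv G U x')"
    by (rule bexE)
  then show ?thesis using that by (elim conjE)
qed


lemma G_bound: "finite U \<Longrightarrow> \<bar>GL G U\<bar> \<le> int (card U) \<and> \<bar>GR G U\<bar> \<le> int (card U)"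
proof (induction "card U" arbitrary: U rule: less_induct)
  case less
  have sub: "card (mv G U x) \<le> card U" for x
    using less.prems by (intro card_mono) (auto simp: mv_sub)
  have fin: "finite (mv G U x)" for x by (rule finite_mv[OF less.prems])
  have IH: "\<bar>GL G (mv G U x)\<bar> \<le> int (card (mv G U x)) \<and> \<bar>GR G (mv G U x)\<bar> \<le> int (card (mv G U x))"
    if "x \<in> U" for x
    using less.hyps[OF card_mv_less[OF less.prems that] fin] .
  have "\<bar>GL G U\<bar> \<le> int (card U)"
  proof (cases "\<exists>x\<in>U. blk G x")
    case True
    then obtain x0 where x0: "x0 \<in> U" "blk G x0" by blast
    obtain x where "x \<in> U" "blk G x" "GL G U = int (card (removed G U x)) + GR G (mv G U x)"
      by (rule GL_attainE[OF less.prems x0])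
    moreover have "- int (card (mv G U x)) \<le> GR G (mv G U x)" "GR G (mv G U x) \<le> int (card (mv G U x))"
      using IH[OF \<open>x \<in> U\<close>] by (simp_all add: abs_le_iff)
    moreover note crem[OF less.prems, of G x] sub[of x]
    ultimately show ?thesis unfolding abs_le_iff by linarith
  qed (simp add: GL_noblk less.prems)
  moreover have "\<bar>GR G U\<bar> \<le> int (card U)"
  proof (cases "\<exists>x\<in>U. \<not> blk G x")
    case True
    then obtain x0 where x0: "x0 \<in> U" "\<not> blk G x0" by blast
    obtain x where "x \<in> U" "\<not> blk G x" "GR G U = - int (card (removed G U x)) + GL G (mv G U x)"
      by (rule GR_attainE[OF less.prems x0])
    moreover have "- int (card (mv G U x)) \<le> GL G (mv G U x)" "GL G (mv G U x) \<le> int (card (mv G U x))"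
      using IH[OF \<open>x \<in> U\<close>] by (simp_all add: abs_le_iff)
    moreover note crem[OF less.prems, of G x] sub[of x]
    ultimately show ?thesis unfolding abs_le_iff by linarith
  qed (simp add: GR_nowht less.prems)
  ultimately show ?case by blast
qed

definition gsym where "gsym G \<longleftrightarrow> (\<forall>u v. adj G u v \<longrightarrow> adj G v u)"
definition gbip where "gbip G \<longleftrightarrow> (\<forall>u v. adj G u v \<longrightarrow> blk G u \<noteq> blk G v)"

lemma core_mono: "X \<subseteq> Y \<Longrightarrow> core G X \<subseteq> core G Y"
  unfolding core_def isolated_def by blast

lemma core_sub: "core G X \<subseteq> X"
  unfolding core_def by blast

lemma symD: "gsym G \<Longrightarrow> adj G u v \<Longrightarrow> adj G v u"
  unfolding gsym_def by blast

lemma core_core_diff: assumes s: "gsym G" shows "core G (core G X - S) = core G (X - S)"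
proof
  show "core G (core G X - S) \<subseteq> core G (X - S)"
    by (rule core_mono) (use core_sub[of G X] in blast)
next
  show "core G (X - S) \<subseteq> core G (core G X - S)"
  proof
    fix v assume "v \<in> core G (X - S)"
    then obtain w where v: "v \<in> X - S" and w: "w \<in> X - S" "adj G v w"
      unfolding core_def isolated_def by blast
    have "adj G w v" using symD[OF s w(2)] .
    then have "w \<in> core G X" using v w unfolding core_def isolated_def by blast
    moreover have "v \<in> core G X" using v w unfolding core_def isolated_def by blast
    ultimately show "v \<in> core G (core G X - S)" using v w unfolding core_def isolated_def by blast
  qed
qed

lemma core_core: "gsym G \<Longrightarrow> core G (core G X) = core G X"
  using core_core_diff[of G X "{}"] by simp

lemma mv_is_core: "gsym G \<Longrightarrow> core G (mv G U x) = mv G U x"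
  by (simp add: mv_core core_core)

lemma nbhd_mv: "nbhd G (mv G U z) w = mv G U z \<inter> nbhd G U w"
  using mv_sub[of G U z] unfolding nbhd_def by auto

lemma mv_mv: "gsym G \<Longrightarrow> mv G (mv G U z) w = core G (U - nbhd G U z - nbhd G U w)"
proof -
  assume s: "gsym G"
  have e: "mv G U z - mv G U z \<inter> nbhd G U w = mv G U z - nbhd G U w" by blast
  have "mv G (mv G U z) w = core G (mv G U z - nbhd G U w)"
    by (simp only: mv_core[of G "mv G U z" w] nbhd_mv e)
  also have "\<dots> = core G (U - nbhd G U z - nbhd G U w)"
    by (simp add: mv_core[of G U z] core_core_diff[OF s] Diff_Int2)
  finally show ?thesis .
qed

lemma mv_comm: "gsym G \<Longrightarrow> mv G (mv G U z) w = mv G (mv G U w) z"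
proof -
  assume s: "gsym G"
  have "U - nbhd G U z - nbhd G U w = U - nbhd G U w - nbhd G U z" by blast
  then show ?thesis using mv_mv[OF s] by simp
qed

lemma mv_absorb:
  assumes s: "gsym G" and w: "w \<in> U" "w \<notin> nbhd G U z" "w \<notin> mv G U z"
  shows "core G (U - nbhd G U z - nbhd G U w) = mv G U z"
proof -
  have iso: "\<not> adj G w u" if "u \<in> U - nbhd G U z" for u
    using w that unfolding mv_core core_def isolated_def by blast
  have eq: "U - nbhd G U z - nbhd G U w = (U - nbhd G U z) - {w}"
    using iso w(1) unfolding nbhd_def by blast
  have "core G ((U - nbhd G U z) - {w}) = core G (U - nbhd G U z)"
  proof
    show "core G (U - nbhd G U z - {w}) \<subseteq> core G (U - nbhd G U z)" by (rule core_mono) blast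
  next
    show "core G (U - nbhd G U z) \<subseteq> core G (U - nbhd G U z - {w})"
    proof
      fix v assume "v \<in> core G (U - nbhd G U z)"
      then obtain u where v: "v \<in> U - nbhd G U z" and u: "u \<in> U - nbhd G U z" "adj G v u"
        unfolding core_def isolated_def by blast
      have "v \<noteq> w" using iso[OF u(1)] u(2) by blast
      moreover have "u \<noteq> w" using iso[OF v] symD[OF s u(2)] by blast
      ultimately show "v \<in> core G (U - nbhd G U z - {w})"
        using u v unfolding core_def isolated_def by blast
    qed
  qed
  then show ?thesis unfolding eq mv_core .
qed

lemma core_both:
  assumes s: "gsym G" and b: "gbip G" and c: "core G W = W" and v: "v \<in> W"
  shows "(\<exists>x\<in>W. blk G x) \<and> (\<exists>y\<in>W. \<not> blk G y)"
proof -
  from v c obtain w where "w \<in> W" "adj G v w" unfolding core_def isolated_def by blast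
  with b v show ?thesis unfolding gbip_def by (cases "blk G v") auto
qed

lemma bip_inter:
  assumes s: "gsym G" and b: "gbip G" and x: "x \<in> U" "blk G x" and y: "y \<in> U" "\<not> blk G y"
  shows "mv G U y \<inter> mv G U x \<subseteq> core G (U - nbhd G U x - nbhd G U y)"
proof
  fix v assume v: "v \<in> mv G U y \<inter> mv G U x"
  then obtain w1 w2 where w1: "w1 \<in> U - nbhd G U y" "adj G v w1"
    and w2: "w2 \<in> U - nbhd G U x" "adj G v w2"
    and vU: "v \<in> U - nbhd G U x" "v \<in> U - nbhd G U y"
    unfolding mv_core core_def isolated_def by blast
  show "v \<in> core G (U - nbhd G U x - nbhd G U y)"
  proof (cases "blk G v")
    case True
    have "w2 \<notin> nbhd G U y"
    proof
      assume "w2 \<in> nbhd G U y"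
      then have "w2 = y \<or> adj G y w2" unfolding nbhd_def by auto
      then show False
      proof
        assume "w2 = y" then have "adj G y v" using symD[OF s w2(2)] by simp
        then show False using vU y unfolding nbhd_def by auto
      next
        assume "adj G y w2" then show False using b w2 True y unfolding gbip_def by metis
      qed
    qed
    then show ?thesis using w2 vU unfolding core_def isolated_def by auto
  next
    case False
    have "w1 \<notin> nbhd G U x"
    proof
      assume "w1 \<in> nbhd G U x"
      then have "w1 = x \<or> adj G x w1" unfolding nbhd_def by auto
      then show False
      proof
        assume "w1 = x" then have "adj G x v" using symD[OF s w1(2)] by simp
        then show False using vU x unfolding nbhd_def by auto
      next
        assume "adj G x w1" then show False using b w1 False x unfolding gbip_def by metis
      qed
    qed
    then show ?thesis using w1 vU unfolding core_def isolated_def by auto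
  qed
qed


lemma diff_swap: "(U::'a set) - A - B = U - B - A" by blast

lemma mv_notin_nbhd: "v \<in> mv G U x \<Longrightarrow> v \<notin> nbhd G U x"
  unfolding mv_core core_def by blast

lemma self_nbhd: "y \<in> U \<Longrightarrow> y \<in> nbhd G U y"
  unfolding nbhd_def by blast

lemma self_notin_mv: "y \<notin> mv G U y"
  unfolding mv_def removed_def nbhd_def by blast

lemma notnb1: assumes s: "gsym G" and "x \<in> mv G U y" "y \<in> U" "y \<noteq> x"
  shows "y \<notin> nbhd G U x"
proof
  assume "y \<in> nbhd G U x"
  then have "adj G x y" using assms(4) unfolding nbhd_def by auto
  then have "adj G y x" by (rule symD[OF s])
  then have "x \<in> nbhd G U y" using assms(2) mv_sub[of G U y] unfolding nbhd_def by auto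
  then show False using mv_notin_nbhd[OF assms(2)] by blast
qed

lemma notnb2: assumes b: "gbip G" and "blk G y = blk G x" "y \<noteq> x"
  shows "y \<notin> nbhd G U x"
proof
  assume "y \<in> nbhd G U x"
  then have "adj G x y" using assms(3) unfolding nbhd_def by auto
  then have "blk G x \<noteq> blk G y" using b unfolding gbip_def by blast
  then show False using assms(2) by simp
qed

lemma milnor:
  assumes s: "gsym G" and b: "gbip G"
  shows "finite U \<Longrightarrow> core G U = U \<Longrightarrow>
     (\<forall>y\<in>U. \<not> blk G y \<longrightarrow> GL G (mv G U y) - int (card (removed G U y)) \<le> GL G U) \<and>
     (\<forall>y\<in>U. \<not> blk G y \<longrightarrow> GR G (mv G U y) - int (card (removed G U y)) \<le> GR G U) \<and>
     GR G U \<le> GL G U"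
proof (induction "card U" arbitrary: U rule: less_induct)
  case less
  note fin = less.prems(1) and cU = less.prems(2)
  have finmv: "finite (mv G V x)" if "finite V" for V x using finite_subset[OF mv_sub that] .
  have coremv: "core G (mv G V x) = mv G V x" for V x by (rule mv_is_core[OF s])
  have IH: "(\<forall>y\<in>mv G U x. \<not> blk G y \<longrightarrow> GL G (mv G (mv G U x) y) - int (card (removed G (mv G U x) y)) \<le> GL G (mv G U x)) \<and>
     (\<forall>y\<in>mv G U x. \<not> blk G y \<longrightarrow> GR G (mv G (mv G U x) y) - int (card (removed G (mv G U x) y)) \<le> GR G (mv G U x)) \<and>
     GR G (mv G U x) \<le> GL G (mv G U x)" if "x \<in> U" for x
    using less.hyps[OF card_mv_less[OF fin that] finmv[OF fin] coremv] .
  have cr: "int (card (removed G V x)) = int (card V) - int (card (mv G V x))" if "finite V" for V x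
    using crem[OF that] .
  have cardsub: "card (mv G V x) \<le> card V" if "finite V" for V x
    using card_mono[OF that mv_sub] .
  have A: "GL G (mv G U y) - int (card (removed G U y)) \<le> GL G U" if y: "y \<in> U" "\<not> blk G y" for y
  proof -
    define W where "W = mv G U y"
    have finW: "finite W" unfolding W_def by (rule finmv[OF fin])
    show ?thesis
    proof (cases "\<exists>x\<in>W. blk G x")
      case False
      have "W = {}"
      proof (rule ccontr)
        assume "W \<noteq> {}"
        then obtain v where "v \<in> W" by blast
        then show False using core_both[OF s b coremv[of U y, folded W_def]] False by blast
      qed
      then have "GL G W = 0" "card (mv G U y) = 0" using W_def by (auto simp: GL_noblk)
      moreover have "- int (card U) \<le> GL G U" using G_bound[OF fin, of G] by auto
      ultimately show ?thesis using cr[OF fin, of y] W_def by simp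
    next
      case True
      then obtain x0 where x0: "x0 \<in> W" "blk G x0" by blast
      obtain x where x: "x \<in> W" "blk G x" "GL G W = int (card (removed G W x)) + GR G (mv G W x)"
        by (rule GL_attainE[OF finW x0])
      have xU: "x \<in> U" using x(1) mv_sub[of G U y] unfolding W_def by blast
      define V where "V = mv G U x"
      have finV: "finite V" unfolding V_def by (rule finmv[OF fin])
      have L: "int (card (removed G U x)) + GR G V \<le> GL G U" using GL_ge[OF fin xU x(2)] V_def by simp
      have cx: "int (card (removed G U x)) = int (card U) - int (card V)" using cr[OF fin] V_def by simp
      have cy: "int (card (removed G U y)) = int (card U) - int (card W)" using cr[OF fin] W_def by simp
      have cWx: "int (card (removed G W x)) = int (card W) - int (card (mv G W x))" using cr[OF finW] by simp
      have WU: "card W \<le> card U" "card V \<le> card U" using cardsub[OF fin] W_def V_def by auto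
      show ?thesis
      proof (cases "y \<in> V")
        case True
        define F where "F = core G (U - nbhd G U x - nbhd G U y)"
        have F1: "mv G W x = F" unfolding W_def F_def mv_mv[OF s] diff_swap[of U "nbhd G U y"] ..
        have F2: "mv G V y = F" unfolding V_def F_def mv_mv[OF s] ..
        have IHb: "GR G F - int (card (removed G V y)) \<le> GR G V"
          using IH[OF xU] True y(2) F2 V_def by auto
        have cVy: "int (card (removed G V y)) = int (card V) - int (card F)" using cr[OF finV] F2 by simp
        have "W \<inter> V \<subseteq> F" unfolding W_def V_def F_def by (rule bip_inter[OF s b xU x(2) y])
        then have "card (W \<inter> V) \<le> card F" by (rule card_mono[rotated]) (simp add: F_def finite_subset[OF core_sub[of G "U - nbhd G U x - nbhd G U y"]] fin)
        moreover have "card (W \<union> V) \<le> card U" using fin W_def V_def mv_sub[of G U x] mv_sub[of G U y] by (intro card_mono) auto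
        moreover have "card (W \<union> V) + card (W \<inter> V) = card W + card V" using card_Un_Int[OF finW finV] by simp
        ultimately have "card W + card V \<le> card U + card F" by linarith
        then have "int (card W) + int (card V) \<le> int (card U) + int (card F)" by linarith
        then show ?thesis using L cx cy cWx x(3) IHb cVy F1 W_def by simp
      next
        case False
        have yx: "y \<noteq> x" using y(2) x(2) by blast
        have "y \<notin> nbhd G U x" using notnb1[OF s x(1)[unfolded W_def] y(1) yx] .
        then have "core G (U - nbhd G U x - nbhd G U y) = V"
          using mv_absorb[OF s y(1) _ False[unfolded V_def]] V_def by simp
        then have F1: "mv G W x = V" unfolding W_def mv_mv[OF s] diff_swap[of U "nbhd G U y"] .
        show ?thesis using L cx cy cWx x(3) F1 WU W_def by simp
      qed
    qed
  qed
  have E: "GR G U \<le> GL G U"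
  proof (cases "\<exists>y\<in>U. \<not> blk G y")
    case True
    then obtain y0 where "y0 \<in> U" "\<not> blk G y0" by blast
    obtain y where y: "y \<in> U" "\<not> blk G y" "GR G U = - int (card (removed G U y)) + GL G (mv G U y)"
      by (rule GR_attainE[OF fin \<open>y0 \<in> U\<close> \<open>\<not> blk G y0\<close>])
    then show ?thesis using A[OF y(1,2)] by simp
  next
    case False
    have "U = {}"
    proof (rule ccontr)
      assume "U \<noteq> {}"
      then obtain v where "v \<in> U" by blast
      then show False using core_both[OF s b cU] False by blast
    qed
    then show ?thesis using GR_nowht[OF fin False] by (simp add: GL_noblk)
  qed
  have B: "GR G (mv G U y) - int (card (removed G U y)) \<le> GR G U" if y: "y \<in> U" "\<not> blk G y" for y
  proof -
    define W where "W = mv G U y"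
    have finW: "finite W" unfolding W_def by (rule finmv[OF fin])
    obtain y' where y': "y' \<in> U" "\<not> blk G y'" "GR G U = - int (card (removed G U y')) + GL G (mv G U y')"
      by (rule GR_attainE[OF fin y])
    define V where "V = mv G U y'"
    have finV: "finite V" unfolding V_def by (rule finmv[OF fin])
    have cy: "int (card (removed G U y)) = int (card U) - int (card W)" using cr[OF fin] W_def by simp
    have cy': "int (card (removed G U y')) = int (card U) - int (card V)" using cr[OF fin] V_def by simp
    have IHeW: "GR G W \<le> GL G W" using IH[OF y(1)] W_def by simp
    show ?thesis
    proof (cases "y' \<in> W")
      case True
      have yy: "y \<noteq> y'" using True self_notin_mv[of y G U] W_def by blast
      have R: "GR G W \<le> - int (card (removed G W y')) + GL G (mv G W y')"
        using GR_le[OF finW True y'(2)] .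
      have cWy': "int (card (removed G W y')) = int (card W) - int (card (mv G W y'))" using cr[OF finW] by simp
      show ?thesis
      proof (cases "y \<in> V")
        case True
        have F: "mv G V y = mv G W y'" unfolding V_def W_def by (rule mv_comm[OF s])
        have IHa: "GL G (mv G V y) - int (card (removed G V y)) \<le> GL G V"
          using IH[OF y'(1)] True y(2) V_def by auto
        have cVy: "int (card (removed G V y)) = int (card V) - int (card (mv G V y))" using cr[OF finV] by simp
        show ?thesis using R cWy' IHa cVy F cy cy' y'(3) W_def V_def by simp
      next
        case False
        have "y \<notin> nbhd G U y'" using notnb2[OF b _ yy] y(2) y'(2) by simp
        then have "core G (U - nbhd G U y' - nbhd G U y) = V"
          using mv_absorb[OF s y(1) _ False[unfolded V_def]] V_def by simp
        then have F: "mv G W y' = V" unfolding W_def mv_mv[OF s] diff_swap[of U "nbhd G U y"] .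
        show ?thesis using R cWy' F cy cy' y'(3) W_def V_def by simp
      qed
    next
      case False
      show ?thesis
      proof (cases "y' = y")
        case True
        then show ?thesis using IHeW y'(3) cy cy' W_def V_def by simp
      next
        case False2: False
        have "y' \<notin> nbhd G U y" using notnb2[OF b _ False2] y(2) y'(2) by simp
        then have WW: "core G (U - nbhd G U y - nbhd G U y') = W"
          using mv_absorb[OF s y'(1) _ False[unfolded W_def]] W_def by simp
        show ?thesis
        proof (cases "y \<in> V")
          case True
          have F: "mv G V y = W" unfolding V_def mv_mv[OF s] diff_swap[of U "nbhd G U y'"] WW ..
          have IHa: "GL G (mv G V y) - int (card (removed G V y)) \<le> GL G V"
            using IH[OF y'(1)] True y(2) V_def by auto
          have cVy: "int (card (removed G V y)) = int (card V) - int (card (mv G V y))" using cr[OF finV] by simp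
          show ?thesis using IHeW IHa cVy F cy cy' y'(3) W_def V_def by simp
        next
          case False3: False
          have "y \<notin> nbhd G U y'" using notnb2[OF b _ False2[symmetric]] y(2) y'(2) by simp
          then have "core G (U - nbhd G U y' - nbhd G U y) = V"
            using mv_absorb[OF s y(1) _ False3[unfolded V_def]] V_def by simp
          then have "W = V" using WW diff_swap[of U "nbhd G U y"] by simp
          then show ?thesis using IHeW cy cy' y'(3) W_def V_def by simp
        qed
      qed
    qed
  qed
  show ?case using A B E by blast
qed


definition swapc :: "'a bgraph \<Rightarrow> 'a bgraph" where
  "swapc G = G\<lparr>blk := (\<lambda>v. \<not> blk G v)\<rparr>"

lemma swapc_simps[simp]: "adj (swapc G) = adj G" "verts (swapc G) = verts G"
   "blk (swapc G) v = (\<not> blk G v)"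
  unfolding swapc_def by simp_all

lemma removed_swap[simp]: "removed (swapc G) U x = removed G U x"
  unfolding removed_def nbhd_def isolated_def by simp

lemma core_swap[simp]: "core (swapc G) U = core G U"
  unfolding core_def isolated_def by simp

lemma swap_g: "finite U \<Longrightarrow> gL (swapc G) n U = - gR G n U \<and> gR (swapc G) n U = - gL G n U"
proof (induction n arbitrary: U)
  case 0 then show ?case by simp
next
  case (Suc n)
  have fin: "finite (U - removed G U x)" for x using Suc.prems by simp
  note IH = Suc.IH[OF fin]
  let ?SR = "{x \<in> U. \<not> blk G x}" and ?SL = "{x \<in> U. blk G x}"
  have finSR: "finite ?SR" "finite ?SL" using Suc.prems by simp_all
  have e1: "(\<lambda>x. int (card (removed G U x)) + gR (swapc G) n (U - removed G U x)) ` ?SR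
      = uminus ` ((\<lambda>x. - int (card (removed G U x)) + gL G n (U - removed G U x)) ` ?SR)"
    unfolding image_image by (rule image_cong) (auto simp: IH)
  have e2: "(\<lambda>x. - int (card (removed G U x)) + gL (swapc G) n (U - removed G U x)) ` ?SL
      = uminus ` ((\<lambda>x. int (card (removed G U x)) + gR G n (U - removed G U x)) ` ?SL)"
    unfolding image_image by (rule image_cong) (auto simp: IH)
  have L: "gL (swapc G) (Suc n) U = - gR G (Suc n) U"
  proof (cases "\<exists>x\<in>U. \<not> blk G x")
    case True
    then have ne: "?SR \<noteq> {}" by blast
    have "gL (swapc G) (Suc n) U = Max ((\<lambda>x. int (card (removed G U x)) + gR (swapc G) n (U - removed G U x)) ` ?SR)"
      using True by simp
    also have "\<dots> = - Min ((\<lambda>x. - int (card (removed G U x)) + gL G n (U - removed G U x)) ` ?SR)"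
      unfolding e1 using ne finSR by (subst minus_Min_eq_Max) auto
    also have "\<dots> = - gR G (Suc n) U" using True by simp
    finally show ?thesis .
  qed simp
  have R: "gR (swapc G) (Suc n) U = - gL G (Suc n) U"
  proof (cases "\<exists>x\<in>U. blk G x")
    case True
    then have ne: "?SL \<noteq> {}" by blast
    have "gR (swapc G) (Suc n) U = Min ((\<lambda>x. - int (card (removed G U x)) + gL (swapc G) n (U - removed G U x)) ` ?SL)"
      using True by simp
    also have "\<dots> = - Max ((\<lambda>x. int (card (removed G U x)) + gR G n (U - removed G U x)) ` ?SL)"
      unfolding e2 using ne finSR by (subst minus_Max_eq_Min) auto
    also have "\<dots> = - gL G (Suc n) U" using True by simp
    finally show ?thesis .
  qed simp
  show ?case using L R by blast
qed

lemma GR_swap: "finite U \<Longrightarrow> GR G U = - GL (swapc G) U"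
  unfolding GR_def GL_def using swap_g[of U G "card U"] by simp


definition nb :: "nat \<times> nat \<Rightarrow> nat \<times> nat \<Rightarrow> bool" where
  "nb u v \<longleftrightarrow> fst u = fst v \<and> (snd v = Suc (snd u) \<or> snd u = Suc (snd v))"

lemma nb_sym: "nb u v \<Longrightarrow> nb v u" unfolding nb_def by auto
lemma nb_irr: "\<not> nb u u" unfolding nb_def by auto

definition core' :: "(nat \<times> nat) set \<Rightarrow> (nat \<times> nat) set" where
  "core' U = {v\<in>U. \<exists>w\<in>U. nb v w}"

definition sep :: "(nat \<times> nat) set \<Rightarrow> (nat \<times> nat) set \<Rightarrow> bool" where
  "sep X Y \<longleftrightarrow> (\<forall>u\<in>X. \<forall>v\<in>Y. \<not> nb u v)"

definition ivl :: "nat \<Rightarrow> nat \<Rightarrow> nat \<Rightarrow> (nat \<times> nat) set" where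
  "ivl i a b = {p. fst p = i \<and> a \<le> snd p \<and> snd p \<le> b}"

lemma mem_ivl[simp]: "p \<in> ivl i a b \<longleftrightarrow> fst p = i \<and> a \<le> snd p \<and> snd p \<le> b"
  unfolding ivl_def by simp

lemma ivl_image: "ivl i a b = Pair i ` {a..b}"
  unfolding ivl_def by (auto simp: image_iff)

lemma card_ivl: "card (ivl i a b) = Suc b - a"
  unfolding ivl_image by (simp add: card_image inj_on_def)

lemma finite_ivl[simp]: "finite (ivl i a b)"
  unfolding ivl_image by simp

definition isrun :: "(nat \<times> nat) set \<Rightarrow> nat \<Rightarrow> nat \<Rightarrow> nat \<Rightarrow> bool" where
  "isrun U i a b \<longleftrightarrow> a \<le> b \<and> ivl i a b \<subseteq> U \<and> (a = 0 \<or> (i, a - 1) \<notin> U) \<and> (i, Suc b) \<notin> U"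

definition runs :: "(nat \<times> nat) set \<Rightarrow> (nat \<times> nat \<times> nat) set" where
  "runs U = {(i, a, b). isrun U i a b}"

definition oddr :: "(nat \<times> nat) set \<Rightarrow> nat" where
  "oddr U = card {r \<in> runs U. even (snd (snd r) - fst (snd r))}"

definition big :: "(nat \<times> nat) set \<Rightarrow> bool" where
  "big U \<longleftrightarrow> (\<exists>r\<in>runs U. fst (snd r) + 2 \<le> snd (snd r))"

definition MM :: "(nat \<times> nat) set \<Rightarrow> int" where
  "MM U = (if U = {} then 0 else if big U then 4 else 2)"

definition Phi :: "(nat \<times> nat) set \<Rightarrow> int" where
  "Phi U = int (oddr U) + MM U"

lemma isrun_mem: "isrun U i a b \<Longrightarrow> (i, a) \<in> U \<and> (i, b) \<in> U"
  unfolding isrun_def by auto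

lemma finite_runs: assumes "finite U" shows "finite (runs U)"
proof -
  have "runs U \<subseteq> (\<lambda>(p, q). (fst p, snd p, snd q)) ` (U \<times> U)"
  proof
    fix r assume "r \<in> runs U"
    then obtain i a b where r: "r = (i, a, b)" "isrun U i a b" unfolding runs_def by auto
    then have "((i, a), (i, b)) \<in> U \<times> U" using isrun_mem by auto
    then show "r \<in> (\<lambda>(p, q). (fst p, snd p, snd q)) ` (U \<times> U)" using r by force
  qed
  then show ?thesis using assms by (auto intro: finite_subset)
qed

lemma sep_ivl_grow:
  assumes "sep X Y" "ivl i a b \<subseteq> X \<union> Y" "(i, a) \<in> X"
  shows "ivl i a b \<subseteq> X"
proof -
  have "a + k \<le> b \<longrightarrow> (i, a + k) \<in> X" for k
  proof (induction k)
    case 0 then show ?case using assms by simp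
  next
    case (Suc k)
    show ?case
    proof
      assume h: "a + Suc k \<le> b"
      then have "(i, a + k) \<in> X" using Suc by simp
      moreover have "(i, a + Suc k) \<in> ivl i a b" using h by simp
      then have "(i, a + Suc k) \<in> X \<union> Y" using assms(2) by blast
      moreover have "nb (i, a + k) (i, a + Suc k)" unfolding nb_def by simp
      ultimately show "(i, a + Suc k) \<in> X" using assms(1) unfolding sep_def by blast
    qed
  qed
  then show ?thesis
  proof (intro subsetI)
    fix p assume "p \<in> ivl i a b"
    then have "p = (i, a + (snd p - a))" "a + (snd p - a) \<le> b" by (auto simp: prod_eq_iff)
    then show "p \<in> X" using \<open>\<And>k. a + k \<le> b \<longrightarrow> (i, a + k) \<in> X\<close> by metis
  qed
qed

lemma sep_sym: "sep X Y \<Longrightarrow> sep Y X"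
  unfolding sep_def using nb_sym by blast

lemma isrun_union1:
  assumes s: "sep X Y" and r: "isrun X i a b"
  shows "isrun (X \<union> Y) i a b"
proof -
  have "(i, a - 1) \<notin> Y" if "a \<noteq> 0"
  proof
    assume "(i, a - 1) \<in> Y"
    moreover have "(i, a) \<in> X" using isrun_mem[OF r] by simp
    moreover have "nb (i, a) (i, a - 1)" using that unfolding nb_def by simp
    ultimately show False using s unfolding sep_def by blast
  qed
  moreover have "(i, Suc b) \<notin> Y"
  proof
    assume "(i, Suc b) \<in> Y"
    moreover have "(i, b) \<in> X" using isrun_mem[OF r] by simp
    moreover have "nb (i, b) (i, Suc b)" unfolding nb_def by simp
    ultimately show False using s unfolding sep_def by blast
  qed
  ultimately show ?thesis using r unfolding isrun_def by auto
qed

lemma runs_union: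
  assumes s: "sep X Y"
  shows "runs (X \<union> Y) = runs X \<union> runs Y"
proof
  show "runs X \<union> runs Y \<subseteq> runs (X \<union> Y)"
    using isrun_union1[OF s] isrun_union1[OF sep_sym[OF s]] unfolding runs_def
    by (auto simp: Un_commute)
next
  show "runs (X \<union> Y) \<subseteq> runs X \<union> runs Y"
  proof
    fix r assume "r \<in> runs (X \<union> Y)"
    then obtain i a b where r: "r = (i, a, b)" "isrun (X \<union> Y) i a b" unfolding runs_def by auto
    have "(i, a) \<in> X \<union> Y" using isrun_mem[OF r(2)] by simp
    then show "r \<in> runs X \<union> runs Y"
    proof
      assume "(i, a) \<in> X"
      then have "ivl i a b \<subseteq> X" using sep_ivl_grow[OF s] r(2) unfolding isrun_def by blast
      then have "isrun X i a b" using r(2) unfolding isrun_def by auto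
      then show ?thesis using r(1) unfolding runs_def by auto
    next
      assume "(i, a) \<in> Y"
      then have "ivl i a b \<subseteq> Y" using sep_ivl_grow[OF sep_sym[OF s]] r(2) unfolding isrun_def
        by (metis Un_commute)
      then have "isrun Y i a b" using r(2) unfolding isrun_def by auto
      then show ?thesis using r(1) unfolding runs_def by auto
    qed
  qed
qed

lemma runs_disj: "X \<inter> Y = {} \<Longrightarrow> runs X \<inter> runs Y = {}"
  unfolding runs_def using isrun_mem by fastforce

lemma oddr_union:
  assumes "finite X" "finite Y" "X \<inter> Y = {}" "sep X Y"
  shows "oddr (X \<union> Y) = oddr X + oddr Y"
proof -
  have "{r \<in> runs (X \<union> Y). even (snd (snd r) - fst (snd r))} =
        {r \<in> runs X. even (snd (snd r) - fst (snd r))} \<union> {r \<in> runs Y. even (snd (snd r) - fst (snd r))}"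
    using runs_union[OF assms(4)] by auto
  moreover have "{r \<in> runs X. even (snd (snd r) - fst (snd r))} \<inter> {r \<in> runs Y. even (snd (snd r) - fst (snd r))} = {}"
    using runs_disj[OF assms(3)] by auto
  ultimately show ?thesis unfolding oddr_def
    using finite_runs[OF assms(1)] finite_runs[OF assms(2)] by (simp add: card_Un_disjoint)
qed

lemma big_union: "sep X Y \<Longrightarrow> big (X \<union> Y) \<longleftrightarrow> big X \<or> big Y"
  unfolding big_def using runs_union by auto

lemma runs_ivl: assumes "a \<le> b" shows "runs (ivl i a b) = {(i, a, b)}"
proof
  show "{(i, a, b)} \<subseteq> runs (ivl i a b)" using assms unfolding runs_def isrun_def by auto
next
  show "runs (ivl i a b) \<subseteq> {(i, a, b)}"
  proof
    fix r assume "r \<in> runs (ivl i a b)"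
    then obtain i' a' b' where r: "r = (i', a', b')" "isrun (ivl i a b) i' a' b'" unfolding runs_def by auto
    have m: "(i', a') \<in> ivl i a b" "(i', b') \<in> ivl i a b" using isrun_mem[OF r(2)] by auto
    have "a' = a"
    proof (rule ccontr)
      assume "a' \<noteq> a"
      then have "a' \<noteq> 0" "(i', a' - 1) \<in> ivl i a b" using m by auto
      then show False using r(2) unfolding isrun_def by auto
    qed
    moreover have "b' = b"
    proof (rule ccontr)
      assume "b' \<noteq> b"
      then have "(i', Suc b') \<in> ivl i a b" using m by auto
      then show False using r(2) unfolding isrun_def by auto
    qed
    ultimately show "r \<in> {(i, a, b)}" using r m by auto
  qed
qed

lemma runs_empty[simp]: "runs {} = {}"
  unfolding runs_def by (auto dest: isrun_mem)

lemma oddr_empty[simp]: "oddr {} = 0" unfolding oddr_def by simp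
lemma big_empty[simp]: "\<not> big {}" unfolding big_def by simp

lemma oddr_ivl: assumes "a \<le> b" shows "oddr (ivl i a b) = (if even (b - a) then 1 else 0)"
proof -
  have "{r \<in> runs (ivl i a b). even (snd (snd r) - fst (snd r))} = (if even (b - a) then {(i, a, b)} else {})"
    using runs_ivl[OF assms] by auto
  then show ?thesis unfolding oddr_def by simp
qed

lemma big_ivl: "a \<le> b \<Longrightarrow> big (ivl i a b) \<longleftrightarrow> a + 2 \<le> b"
  unfolding big_def by (simp add: runs_ivl)

lemma core'_union: "sep X Y \<Longrightarrow> core' (X \<union> Y) = core' X \<union> core' Y"
  unfolding core'_def sep_def using nb_sym by blast

lemma core'_ivl: "core' (ivl i a b) = (if a < b then ivl i a b else {})"
proof (cases "a < b")
  case True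
  have "v \<in> core' (ivl i a b)" if v: "v \<in> ivl i a b" for v
  proof (cases "snd v < b")
    case True
    then have "(fst v, Suc (snd v)) \<in> ivl i a b" "nb v (fst v, Suc (snd v))" using v unfolding nb_def by auto
    then show ?thesis using v unfolding core'_def by blast
  next
    case False
    then have "snd v = b" using v by auto
    then have "(fst v, b - 1) \<in> ivl i a b" "nb v (fst v, b - 1)" using v \<open>a < b\<close> unfolding nb_def by auto
    then show ?thesis using v unfolding core'_def by blast
  qed
  then show ?thesis using True unfolding core'_def by auto
next
  case False
  have "core' (ivl i a b) = {}" unfolding core'_def nb_def using False by auto
  then show ?thesis using False by simp
qed

lemma core'_empty[simp]: "core' {} = {}" unfolding core'_def by simp


definition pathG :: "(nat \<times> nat) bgraph \<Rightarrow> bool" where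
  "pathG G \<longleftrightarrow> finite (verts G) \<and> (\<forall>u v. adj G u v \<longleftrightarrow> u \<in> verts G \<and> v \<in> verts G \<and> nb u v) \<and>
     (\<forall>u v. u \<in> verts G \<longrightarrow> v \<in> verts G \<longrightarrow> nb u v \<longrightarrow> blk G u \<noteq> blk G v)"

lemma pathG_sym: "pathG G \<Longrightarrow> gsym G"
  unfolding pathG_def gsym_def using nb_sym by blast

lemma pathG_bip: "pathG G \<Longrightarrow> gbip G"
  unfolding pathG_def gbip_def by blast

lemma pathG_swap: "pathG G \<Longrightarrow> pathG (swapc G)"
  unfolding pathG_def by simp

lemma core_eq: "pathG G \<Longrightarrow> U \<subseteq> verts G \<Longrightarrow> core G U = core' U"
  unfolding pathG_def core_def core'_def isolated_def by blast

lemma mv_eq: assumes "pathG G" "U \<subseteq> verts G" "x \<in> U"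
  shows "mv G U x = core' (U - {y\<in>U. y = x \<or> nb x y})"
proof -
  have "nbhd G U x = {y\<in>U. y = x \<or> nb x y}"
    using assms unfolding pathG_def nbhd_def by blast
  moreover have "U - nbhd G U x \<subseteq> verts G" using assms by blast
  ultimately show ?thesis unfolding mv_core using core_eq[OF assms(1)] by simp
qed

lemma sep_mono: "sep X Y \<Longrightarrow> X' \<subseteq> X \<Longrightarrow> Y' \<subseteq> Y \<Longrightarrow> sep X' Y'"
  unfolding sep_def by blast

definition Lp :: "nat \<Rightarrow> nat \<Rightarrow> nat \<Rightarrow> (nat \<times> nat) set" where
  "Lp i a j = (if a + 3 \<le> j then ivl i a (j - 2) else {})"
definition Rp :: "nat \<Rightarrow> nat \<Rightarrow> nat \<Rightarrow> (nat \<times> nat) set" where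
  "Rp i j b = (if j + 3 \<le> b then ivl i (j + 2) b else {})"

lemma run_sep:
  assumes c: "core' U = U" and r: "isrun U i a b"
  shows "sep (U - ivl i a b) (ivl i a b)" "core' (U - ivl i a b) = U - ivl i a b"
proof -
  show s: "sep (U - ivl i a b) (ivl i a b)"
    unfolding sep_def
  proof (intro ballI notI)
    fix u v assume u: "u \<in> U - ivl i a b" and v: "v \<in> ivl i a b" and n: "nb u v"
    obtain i' t where ut: "u = (i', t)" by (cases u)
    have "i' = i" using n v ut unfolding nb_def by auto
    have "snd v = Suc t \<or> t = Suc (snd v)" using n ut unfolding nb_def by auto
    then show False
    proof
      assume "snd v = Suc t"
      then have "snd v = a" "a \<noteq> 0" using u v ut \<open>i' = i\<close> by auto
      then show False using r u ut \<open>i' = i\<close> \<open>snd v = Suc t\<close> unfolding isrun_def by auto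
    next
      assume "t = Suc (snd v)"
      then have "snd v = b" using u v ut \<open>i' = i\<close> by auto
      then show False using r u ut \<open>i' = i\<close> \<open>t = Suc (snd v)\<close> unfolding isrun_def by auto
    qed
  qed
  show "core' (U - ivl i a b) = U - ivl i a b"
  proof
    show "core' (U - ivl i a b) \<subseteq> U - ivl i a b" unfolding core'_def by blast
  next
    show "U - ivl i a b \<subseteq> core' (U - ivl i a b)"
    proof
      fix v assume v: "v \<in> U - ivl i a b"
      then obtain w where w: "w \<in> U" "nb v w" using c unfolding core'_def by blast
      have "w \<notin> ivl i a b" using s v w unfolding sep_def by blast
      then show "v \<in> core' (U - ivl i a b)" using v w unfolding core'_def by blast
    qed
  qed
qed

lemma move_struct:
  assumes c: "core' U = U" and r: "isrun U i a b" and j: "a \<le> j" "j \<le> b"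
  shows "core' (U - {y\<in>U. y = (i, j) \<or> nb (i, j) y}) = (U - ivl i a b) \<union> Lp i a j \<union> Rp i j b"
proof -
  define Rest where "Rest = U - ivl i a b"
  define Lr where "Lr = (if a + 2 \<le> j then ivl i a (j - 2) else {})"
  define Rr where "Rr = (if j + 2 \<le> b then ivl i (j + 2) b else {})"
  have sub: "ivl i a b \<subseteq> U" using r unfolding isrun_def by auto
  have nl: "(i, t) \<notin> U" if "Suc t = a" for t using r that unfolding isrun_def by auto
  have nr: "(i, Suc b) \<notin> U" using r unfolding isrun_def by auto
  have eq: "U - {y\<in>U. y = (i, j) \<or> nb (i, j) y} = Rest \<union> Lr \<union> Rr"
  proof (rule set_eqI)
    fix v :: "nat \<times> nat"
    obtain i' t where vt: "v = (i', t)" by (cases v)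
    show "v \<in> U - {y\<in>U. y = (i, j) \<or> nb (i, j) y} \<longleftrightarrow> v \<in> Rest \<union> Lr \<union> Rr"
    proof (cases "i' = i \<and> a \<le> t \<and> t \<le> b")
      case True
      then have "v \<in> U" using sub vt by auto
      then show ?thesis using True j unfolding vt Rest_def Lr_def Rr_def nb_def by auto
    next
      case False
      have "\<not> nb (i, j) v" if "v \<in> U"
      proof
        assume n: "nb (i, j) v"
        then have ii: "i' = i" and tj: "t = Suc j \<or> j = Suc t" unfolding nb_def vt by auto
        from tj show False
        proof
          assume "t = Suc j"
          then have "t = Suc b" using False ii j by auto
          then show False using nr that vt ii by simp
        next
          assume "j = Suc t"
          then have "Suc t = a" using False ii j by auto
          then show False using nl that vt ii by simp
        qed
      qed
      then show ?thesis using False unfolding vt Rest_def Lr_def Rr_def using j by auto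
    qed
  qed
  have s1: "sep Rest (ivl i a b)" and cR: "core' Rest = Rest" using run_sep[OF c r] Rest_def by auto
  have LrS: "Lr \<subseteq> ivl i a b" and RrS: "Rr \<subseteq> ivl i a b" unfolding Lr_def Rr_def using j by auto
  have s2: "sep Lr Rr" unfolding sep_def Lr_def Rr_def nb_def by auto
  have s3: "sep (Rest \<union> Lr) Rr" using sep_mono[OF s1 _ RrS] s2 unfolding sep_def by blast
  have s4: "sep Rest Lr" using sep_mono[OF s1 _ LrS] by blast
  have "core' (Rest \<union> Lr \<union> Rr) = Rest \<union> core' Lr \<union> core' Rr"
    using core'_union[OF s3] core'_union[OF s4] cR by simp
  moreover have "core' Lr = Lp i a j" unfolding Lr_def Lp_def by (auto simp: core'_ivl)
  moreover have "core' Rr = Rp i j b" unfolding Rr_def Rp_def by (auto simp: core'_ivl)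
  ultimately show ?thesis using eq Rest_def by simp
qed

lemma move_quant:
  assumes f: "finite U" and c: "core' U = U" and r: "isrun U i a b" and j: "a \<le> j" "j \<le> b"
  defines "Rest \<equiv> U - ivl i a b" and "W \<equiv> (U - ivl i a b) \<union> Lp i a j \<union> Rp i j b"
  shows "card U = card Rest + (Suc b - a)"
    "card W = card Rest + (if a + 3 \<le> j then j - 1 - a else 0) + (if j + 3 \<le> b then b - j - 1 else 0)"
    "oddr U = oddr Rest + (if even (b - a) then 1 else 0)"
    "oddr W = oddr Rest + (if a + 3 \<le> j \<and> even (j - 2 - a) then 1 else 0) + (if j + 3 \<le> b \<and> even (b - (j + 2)) then 1 else 0)"
    "big U \<longleftrightarrow> big Rest \<or> a + 2 \<le> b"
    "big W \<longleftrightarrow> big Rest \<or> (a + 4 \<le> j) \<or> (j + 4 \<le> b)"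
    "W = {} \<longleftrightarrow> Rest = {} \<and> \<not> a + 3 \<le> j \<and> \<not> j + 3 \<le> b"
proof -
  have sub: "ivl i a b \<subseteq> U" and ab: "a \<le> b" using r unfolding isrun_def by auto
  have s1: "sep Rest (ivl i a b)" using run_sep[OF c r] Rest_def by auto
  have finR: "finite Rest" using f Rest_def by simp
  have U: "U = Rest \<union> ivl i a b" using sub Rest_def by auto
  have d1: "Rest \<inter> ivl i a b = {}" using Rest_def by auto
  have LS: "Lp i a j \<subseteq> ivl i a b" and RS: "Rp i j b \<subseteq> ivl i a b" unfolding Lp_def Rp_def using j by auto
  have s2: "sep (Lp i a j) (Rp i j b)" unfolding sep_def Lp_def Rp_def nb_def by auto
  have d2: "Lp i a j \<inter> Rp i j b = {}" unfolding Lp_def Rp_def by auto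
  have s3: "sep Rest (Lp i a j \<union> Rp i j b)" by (rule sep_mono[OF s1 order_refl Un_least[OF LS RS]])
  have d3: "Rest \<inter> (Lp i a j \<union> Rp i j b) = {}" using d1 LS RS by blast
  have W: "W = Rest \<union> (Lp i a j \<union> Rp i j b)" unfolding W_def Rest_def by (simp add: Un_assoc)
  have finLR: "finite (Lp i a j)" "finite (Rp i j b)" unfolding Lp_def Rp_def by auto
  show "card U = card Rest + (Suc b - a)" using U d1 finR by (simp add: card_Un_disjoint card_ivl)
  show "card W = card Rest + (if a + 3 \<le> j then j - 1 - a else 0) + (if j + 3 \<le> b then b - j - 1 else 0)"
    unfolding W using d2 d3 finR finLR
    by (simp add: card_Un_disjoint card_ivl) (simp add: Lp_def Rp_def card_ivl)
  show "oddr U = oddr Rest + (if even (b - a) then 1 else 0)"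
    unfolding U using oddr_union[OF finR _ d1 s1] oddr_ivl[OF ab] by simp
  have oL: "oddr (Lp i a j) = (if a + 3 \<le> j \<and> even (j - 2 - a) then 1 else 0)"
    unfolding Lp_def by (simp add: oddr_ivl)
  have oR: "oddr (Rp i j b) = (if j + 3 \<le> b \<and> even (b - (j + 2)) then 1 else 0)"
    unfolding Rp_def by (simp add: oddr_ivl)
  show "oddr W = oddr Rest + (if a + 3 \<le> j \<and> even (j - 2 - a) then 1 else 0) + (if j + 3 \<le> b \<and> even (b - (j + 2)) then 1 else 0)"
    unfolding W using oddr_union[OF finR _ d3 s3] oddr_union[OF finLR d2 s2] oL oR finLR by simp
  show "big U \<longleftrightarrow> big Rest \<or> a + 2 \<le> b"
    unfolding U using big_union[OF s1] big_ivl[OF ab] by simp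
  have bL: "big (Lp i a j) \<longleftrightarrow> a + 4 \<le> j" unfolding Lp_def by (auto simp: big_ivl)
  have bR: "big (Rp i j b) \<longleftrightarrow> j + 4 \<le> b" unfolding Rp_def by (auto simp: big_ivl)
  show "big W \<longleftrightarrow> big Rest \<or> (a + 4 \<le> j) \<or> (j + 4 \<le> b)"
    unfolding W using big_union[OF s3] big_union[OF s2] bL bR by simp
  show "W = {} \<longleftrightarrow> Rest = {} \<and> \<not> a + 3 \<le> j \<and> \<not> j + 3 \<le> b"
  proof -
    have Le: "Lp i a j = {} \<longleftrightarrow> \<not> a + 3 \<le> j"
    proof (cases "a + 3 \<le> j")
      case True
      then have "(i, a) \<in> Lp i a j" unfolding Lp_def by simp
      then show ?thesis using True by blast
    qed (simp add: Lp_def)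
    have Re: "Rp i j b = {} \<longleftrightarrow> \<not> j + 3 \<le> b"
    proof (cases "j + 3 \<le> b")
      case True
      then have "(i, b) \<in> Rp i j b" unfolding Rp_def by simp
      then show ?thesis using True by blast
    qed (simp add: Rp_def)
    show ?thesis unfolding W using Le Re by blast
  qed
qed


definition cv :: "nat \<Rightarrow> nat \<Rightarrow> int" where
  "cv l r = int (l + r + 1) - (if 3 \<le> l then int l - 1 else 0) - (if 3 \<le> r then int r - 1 else 0)"
definition dv :: "nat \<Rightarrow> nat \<Rightarrow> int" where
  "dv l r = (if 3 \<le> l \<and> even l then 1 else 0) + (if 3 \<le> r \<and> even r then 1 else 0) - (if even (l + r) then 1 else 0)"

lemma five: "(l::nat) = 0 \<or> l = 1 \<or> l = 2 \<or> (3 \<le> l \<and> even l) \<or> (3 \<le> l \<and> odd l)"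
  by auto

lemma arith_left: "1 \<le> l + r \<Longrightarrow> cv l r + dv l r \<le> (if 2 \<le> l + r then 4 else 2)"
  unfolding cv_def dv_def
  using five[of l] five[of r] by (elim disjE conjE; simp)

lemma R1: "l + r = 1 \<Longrightarrow> cv l r - dv l r \<ge> 2"
  unfolding cv_def dv_def by auto
lemma R2: "l + r = 2 \<Longrightarrow> l \<le> 1 \<Longrightarrow> cv l r - dv l r \<ge> 4"
  unfolding cv_def dv_def by (cases l) auto
lemma R3: "3 \<le> l + r \<Longrightarrow> l = 2 \<Longrightarrow> cv l r - dv l r \<ge> 4"
  unfolding cv_def dv_def using five[of r] by (elim disjE conjE; simp)
lemma R4: "3 \<le> l + r \<Longrightarrow> even (l + r) \<or> l + r = 3 \<Longrightarrow> l = 1 \<Longrightarrow> cv l r - dv l r \<ge> 4"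
  unfolding cv_def dv_def using five[of r] by (elim disjE conjE; simp)
lemma R5: "3 \<le> l + r \<Longrightarrow> r = 2 \<Longrightarrow> cv l r - dv l r \<ge> 4"
  unfolding cv_def dv_def using five[of l] by (elim disjE conjE; simp)

lemma run_exists:
  assumes f: "finite U" and v: "(i, j) \<in> U"
  shows "\<exists>a b. isrun U i a b \<and> a \<le> j \<and> j \<le> b"
proof -
  define S where "S = {s. s \<le> j \<and> ivl i s j \<subseteq> U}"
  define T where "T = {t. j \<le> t \<and> ivl i j t \<subseteq> U}"
  have jS: "j \<in> S" unfolding S_def using v by (auto simp: prod_eq_iff)
  have jT: "j \<in> T" unfolding T_def using v by (auto simp: prod_eq_iff)
  have finS: "finite S" unfolding S_def by (rule finite_subset[of _ "{..j}"]) auto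
  have "T \<subseteq> snd ` U"
  proof
    fix t assume "t \<in> T"
    then have "(i, t) \<in> U" unfolding T_def by auto
    then show "t \<in> snd ` U" by force
  qed
  then have finT: "finite T" using f finite_subset by blast
  define a where "a = Min S"
  define b where "b = Max T"
  have aS: "a \<in> S" unfolding a_def using finS jS by (intro Min_in) auto
  have bT: "b \<in> T" unfolding b_def using finT jT by (intro Max_in) auto
  have aj: "a \<le> j" using aS unfolding S_def by simp
  have jb: "j \<le> b" using bT unfolding T_def by simp
  have sub: "ivl i a b \<subseteq> U"
  proof
    fix p assume p: "p \<in> ivl i a b"
    show "p \<in> U"
    proof (cases "snd p \<le> j")
      case True then show ?thesis using aS p unfolding S_def by auto
    next
      case False then show ?thesis using bT p unfolding T_def by auto
    qed
  qed
  have left: "a = 0 \<or> (i, a - 1) \<notin> U"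
  proof (rule ccontr)
    assume h: "\<not> (a = 0 \<or> (i, a - 1) \<notin> U)"
    have "ivl i (a - 1) j \<subseteq> U"
    proof
      fix p assume p: "p \<in> ivl i (a - 1) j"
      show "p \<in> U"
      proof (cases "snd p = a - 1")
        case True
        then have "p = (i, a - 1)" using p by (simp add: prod_eq_iff)
        then show ?thesis using h by simp
      next
        case False
        then have "p \<in> ivl i a j" using p h by auto
        then show ?thesis using aS unfolding S_def by blast
      qed
    qed
    then have "a - 1 \<in> S" using aj unfolding S_def by simp
    then have "a \<le> a - 1" unfolding a_def using finS by simp
    moreover have "a \<noteq> 0" using h by auto
    ultimately show False by arith
  qed
  have right: "(i, Suc b) \<notin> U"
  proof
    assume h: "(i, Suc b) \<in> U"
    have "ivl i j (Suc b) \<subseteq> U"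
    proof
      fix p assume p: "p \<in> ivl i j (Suc b)"
      show "p \<in> U"
      proof (cases "snd p = Suc b")
        case True
        then have "p = (i, Suc b)" using p by (simp add: prod_eq_iff)
        then show ?thesis using h by simp
      next
        case False
        then have "p \<in> ivl i j b" using p by auto
        then show ?thesis using bT unfolding T_def by blast
      qed
    qed
    then have "Suc b \<in> T" using jb unfolding T_def by simp
    then have "Suc b \<le> b" unfolding b_def using finT by simp
    then show False by simp
  qed
  show ?thesis unfolding isrun_def using aj jb sub left right by (intro exI[of _ a] exI[of _ b]) auto
qed

lemma run_lt:
  assumes c: "core' U = U" and r: "isrun U i a b"
  shows "a < b"
proof (rule ccontr)
  assume "\<not> a < b"
  then have ab: "a = b" using r unfolding isrun_def by simp
  have "(i, a) \<in> U" using isrun_mem[OF r] by simp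
  then obtain w where w: "w \<in> U" "nb (i, a) w" using c unfolding core'_def by blast
  obtain i' t where wt: "w = (i', t)" by (cases w)
  have "i' = i" "t = Suc a \<or> a = Suc t" using w(2) wt unfolding nb_def by auto
  then show False using r w(1) wt ab unfolding isrun_def by auto
qed

lemma even_m2: "2 \<le> n \<Longrightarrow> even (n - 2) = even (n::nat)"
proof -
  assume "2 \<le> n"
  then obtain m where "n = m + 2" using le_Suc_ex by (metis add.commute)
  then show ?thesis by simp
qed

lemma MM_nonneg: "MM U \<ge> 0" unfolding MM_def by auto
lemma Phi_nonneg: "Phi U \<ge> 0" unfolding Phi_def using MM_nonneg[of U] by simp

lemma move_vals:
  assumes p: "pathG G" and Uv: "U \<subseteq> verts G" and f: "finite U" and c: "core G U = U"
    and r: "isrun U i a b" and j: "a \<le> j" "j \<le> b"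
  shows "int (card (removed G U (i, j))) = cv (j - a) (b - j)"
    "int (oddr (mv G U (i, j))) - int (oddr U) = dv (j - a) (b - j)"
    "MM (mv G U (i, j)) \<le> MM U"
proof -
  have c': "core' U = U" using core_eq[OF p Uv] c by simp
  have xU: "(i, j) \<in> U" using r j unfolding isrun_def by auto
  define W where "W = (U - ivl i a b) \<union> Lp i a j \<union> Rp i j b"
  have mvW: "mv G U (i, j) = W" unfolding W_def mv_eq[OF p Uv xU] using move_struct[OF c' r j] .
  note q = move_quant[OF f c' r j, folded W_def]
  obtain l where l: "j = a + l" using j(1) le_Suc_ex by blast
  obtain rr where rr: "b = j + rr" using j(2) le_Suc_ex by blast
  have "int (card (removed G U (i, j))) = int (card U) - int (card W)"
    using crem[OF f] mvW by simp
  also have "\<dots> = cv (j - a) (b - j)"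
    unfolding q(1) q(2) cv_def l rr by (auto simp: of_nat_diff)
  finally show "int (card (removed G U (i, j))) = cv (j - a) (b - j)" .
  have e1: "even (a + l - 2 - a) = even l" if "3 \<le> l" using that even_m2[of l] by simp
  have e2: "even (a + l + rr - (a + l + 2)) = even rr" if "3 \<le> rr" using that even_m2[of rr] by simp
  have "int (oddr (mv G U (i, j))) - int (oddr U) = int (oddr W) - int (oddr U)" by (simp add: mvW)
  also have "\<dots> = int (if a + 3 \<le> j \<and> even (j - 2 - a) then 1 else 0) + int (if j + 3 \<le> b \<and> even (b - (j + 2)) then 1 else 0)
      - int (if even (b - a) then 1 else 0)"
  proof -
    have h3: "int (oddr U) = int (oddr (U - ivl i a b)) + int (if even (b - a) then 1 else 0)"
      by (simp only: q(3) of_nat_add)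
    have h4: "int (oddr W) = int (oddr (U - ivl i a b)) + int (if a + 3 \<le> j \<and> even (j - 2 - a) then 1 else 0) + int (if j + 3 \<le> b \<and> even (b - (j + 2)) then 1 else 0)"
      by (simp only: q(4) of_nat_add)
    show ?thesis using h3 h4 by linarith
  qed
  also have "\<dots> = dv (j - a) (b - j)"
    unfolding dv_def l rr using e1 e2 by auto
  finally show "int (oddr (mv G U (i, j))) - int (oddr U) = dv (j - a) (b - j)" .
  show "MM (mv G U (i, j)) \<le> MM U"
  proof (cases "W = {}")
    case True then show ?thesis using mvW MM_nonneg[of U] by (simp add: MM_def)
  next
    case False
    then have "U \<noteq> {}" using xU by blast
    moreover have "big W \<longrightarrow> big U" using q(5) q(6) j by auto
    ultimately show ?thesis using mvW False unfolding MM_def by auto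
  qed
qed

lemma alt_gen:
  assumes "\<And>t. a \<le> t \<Longrightarrow> Suc t \<le> b \<Longrightarrow> P t \<noteq> P (Suc t)"
  shows "a + k \<le> b \<Longrightarrow> P (a + k) = (if even k then P a else \<not> P a)"
proof (induction k)
  case 0 then show ?case by simp
next
  case (Suc k)
  then have "P (a + k) \<noteq> P (Suc (a + k))" using assms[of "a + k"] by simp
  then show ?case using Suc by auto
qed

lemma MM_cases: "U \<noteq> {} \<Longrightarrow> MM U = (if big U then 4 else 2)"
  unfolding MM_def by simp

lemma right_move:
  assumes p: "pathG G" and Wv: "W \<subseteq> verts G" and f: "finite W" and c: "core G W = W" and ne: "W \<noteq> {}"
  shows "\<exists>y\<in>W. \<not> blk G y \<and> int (card (removed G W y)) - (int (oddr (mv G W y)) - int (oddr W)) \<ge> MM W"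
proof -
  have c': "core' W = W" using core_eq[OF p Wv] c by simp
  obtain i a b where r: "isrun W i a b" and rb: "big W \<longrightarrow> a + 2 \<le> b"
  proof (cases "big W")
    case True
    then obtain rr where "rr \<in> runs W" "fst (snd rr) + 2 \<le> snd (snd rr)" unfolding big_def by blast
    then show ?thesis using that unfolding runs_def by auto
  next
    case False
    obtain v where "v \<in> W" using ne by blast
    then obtain i j where "(i, j) \<in> W" by (cases v) auto
    then obtain a b where "isrun W i a b" using run_exists[OF f] by blast
    then show ?thesis using that False by blast
  qed
  have ab: "a < b" using run_lt[OF c' r] .
  have sub: "ivl i a b \<subseteq> W" using r unfolding isrun_def by auto
  have MMW: "MM W = (if big W then 4 else 2)" using MM_cases[OF ne] .
  have bigI: "big W" if "a + 2 \<le> b" using r that unfolding big_def runs_def by force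
  define P where "P t = (\<not> blk G (i, t))" for t
  have alt: "P t \<noteq> P (Suc t)" if "a \<le> t" "Suc t \<le> b" for t
  proof -
    have "(i, t) \<in> ivl i a b" "(i, Suc t) \<in> ivl i a b" using that by auto
    then have "(i, t) \<in> verts G" "(i, Suc t) \<in> verts G" using sub Wv by blast+
    moreover have "nb (i, t) (i, Suc t)" unfolding nb_def by simp
    ultimately have "blk G (i, t) \<noteq> blk G (i, Suc t)" using p unfolding pathG_def by blast
    then show ?thesis unfolding P_def by simp
  qed
  have good: "\<exists>y\<in>W. \<not> blk G y \<and> int (card (removed G W y)) - (int (oddr (mv G W y)) - int (oddr W)) \<ge> MM W"
    if j: "a \<le> j" "j \<le> b" "P j" and v: "cv (j - a) (b - j) - dv (j - a) (b - j) \<ge> MM W" for j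
  proof -
    have "(i, j) \<in> W" using sub j by auto
    moreover have "\<not> blk G (i, j)" using j(3) unfolding P_def .
    moreover note move_vals[OF p Wv f c r j(1,2)]
    ultimately show ?thesis using v by (intro bexI[of _ "(i, j)"]) auto
  qed
  show ?thesis
  proof (cases "b = a + 1")
    case True
    then have "\<not> big W" using rb by auto
    then have M: "MM W = 2" using MMW by simp
    have "P a \<or> P b" using alt[of a] True by auto
    then show ?thesis
    proof
      assume "P a" then show ?thesis using good[of a] R1[of "a - a" "b - a"] True M by auto
    next
      assume "P b" then show ?thesis using good[of b] R1[of "b - a" "b - b"] True M by auto
    qed
  next
    case False
    then have a2: "a + 2 \<le> b" using ab by auto
    then have M: "MM W = 4" using MMW bigI by simp
    show ?thesis
    proof (cases "b = a + 2")
      case True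
      have "P a \<or> P (a + 1)" using alt[of a] True by auto
      then show ?thesis
      proof
        assume "P a" then show ?thesis using good[of a] R2[of "a - a" "b - a"] True M by auto
      next
        assume "P (a + 1)" then show ?thesis using good[of "a + 1"] R2[of "a + 1 - a" "b - (a + 1)"] True M by auto
      qed
    next
      case False
      then have a3: "a + 3 \<le> b" using a2 by auto
      show ?thesis
      proof (cases "P (a + 2)")
        case True
        then show ?thesis using good[of "a + 2"] R3[of "a + 2 - a" "b - (a + 2)"] a3 M by auto
      next
        case notP2: False
        then have P1: "P (a + 1)" using alt[of "a + 1"] a3 by auto
        show ?thesis
        proof (cases "even (b - a) \<or> b = a + 3")
          case True
          then have "even ((a + 1 - a) + (b - (a + 1))) \<or> (a + 1 - a) + (b - (a + 1)) = 3" using a3 by auto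
          then show ?thesis using good[of "a + 1"] R4[of "a + 1 - a" "b - (a + 1)"] a3 M P1 by auto
        next
          case False
          have ag: "P (a + k) = (if even k then P a else \<not> P a)" if "a + k \<le> b" for k
            using alt_gen[of a b P k] alt that by blast
          have Pa: "\<not> P a" using ag[of 2] a3 notP2 by simp
          have k: "b - 2 = a + (b - 2 - a)" using a3 by simp
          have "odd (b - 2 - a)" using False a3 by (auto simp: even_iff_mod_2_eq_zero) presburger?
          then have "P (b - 2)" using ag[of "b - 2 - a"] Pa a3 k by simp
          then show ?thesis using good[of "b - 2"] R5[of "b - 2 - a" "b - (b - 2)"] a3 M by auto
        qed
      qed
    qed
  qed
qed

lemma main_bound:
  assumes p: "pathG G"
  shows "U \<subseteq> verts G \<Longrightarrow> core G U = U \<Longrightarrow> GL G U \<le> Phi U"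
proof (induction "card U" arbitrary: U rule: less_induct)
  case less
  have Uv: "U \<subseteq> verts G" and cU: "core G U = U" using less.prems by auto
  have finV: "finite (verts G)" using p unfolding pathG_def by blast
  have f: "finite U" using finite_subset[OF Uv finV] .
  have c': "core' U = U" using core_eq[OF p Uv] cU by simp
  have s: "gsym G" and b: "gbip G" using pathG_sym[OF p] pathG_bip[OF p] by auto
  show ?case
  proof (cases "\<exists>x\<in>U. blk G x")
    case False
    then show ?thesis using GL_noblk[OF f False] Phi_nonneg[of U] by simp
  next
    case True
    then obtain x0 where x0: "x0 \<in> U" "blk G x0" by blast
    obtain x where x: "x \<in> U" "blk G x" "GL G U = int (card (removed G U x)) + GR G (mv G U x)"
      by (rule GL_attainE[OF f x0])
    obtain i j where xij: "x = (i, j)" by (cases x)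
    obtain a bb where r: "isrun U i a bb" and j: "a \<le> j" "j \<le> bb"
      using run_exists[OF f] x(1) xij by blast
    have ab: "a < bb" using run_lt[OF c' r] .
    define W where "W = mv G U x"
    have mvs: "int (card (removed G U x)) = cv (j - a) (bb - j)"
      "int (oddr W) - int (oddr U) = dv (j - a) (bb - j)"
      using move_vals[OF p Uv f cU r j] xij W_def by auto
    have al: "cv (j - a) (bb - j) + dv (j - a) (bb - j) \<le> (if 2 \<le> (j - a) + (bb - j) then 4 else 2)"
      using arith_left[of "j - a" "bb - j"] ab j by auto
    have MU: "MM U = (if big U then 4 else 2)" using MM_cases x(1) by blast
    have bigU: "big U" if "2 \<le> (j - a) + (bb - j)" using r that j unfolding big_def runs_def by force
    have vL: "int (card (removed G U x)) + int (oddr W) - int (oddr U) \<le> MM U"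
      using mvs al MU bigU by (auto split: if_splits)
    have Wv: "W \<subseteq> verts G" using mv_sub[of G U x] Uv W_def by blast
    have finW: "finite W" using finite_mv[OF f] W_def by simp
    have cW: "core G W = W" using mv_is_core[OF s] W_def by simp
    have cardW: "card W < card U" using card_mv_less[OF f x(1)] W_def by simp
    show ?thesis
    proof (cases "\<exists>y\<in>W. \<not> blk G y")
      case False
      have "W = {}"
      proof (rule ccontr)
        assume "W \<noteq> {}"
        then obtain v where "v \<in> W" by blast
        then show False using core_both[OF s b cW] False by blast
      qed
      then have "GR G W = 0" "oddr W = 0" using GR_nowht[OF finW False] by auto
      then show ?thesis using x(3) vL W_def unfolding Phi_def by simp
    next
      case True
      then have ne: "W \<noteq> {}" by blast
      obtain y where y: "y \<in> W" "\<not> blk G y"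
        and vR: "int (card (removed G W y)) - (int (oddr (mv G W y)) - int (oddr W)) \<ge> MM W"
        using right_move[OF p Wv finW cW ne] by blast
      obtain i2 j2 where yij: "y = (i2, j2)" by (cases y)
      obtain a2 b2 where r2: "isrun W i2 a2 b2" and j2: "a2 \<le> j2" "j2 \<le> b2"
        using run_exists[OF finW] y(1) yij by blast
      have MMy: "MM (mv G W y) \<le> MM W" using move_vals(3)[OF p Wv finW cW r2 j2] yij by simp
      have le: "GR G W \<le> - int (card (removed G W y)) + GL G (mv G W y)" using GR_le[OF finW y] .
      have IH: "GL G (mv G W y) \<le> Phi (mv G W y)"
      proof (rule less.hyps)
        show "card (mv G W y) < card U" using card_mv_less[OF finW y(1), of G] cardW by simp
        show "mv G W y \<subseteq> verts G" using mv_sub[of G W y] Wv by blast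
        show "core G (mv G W y) = mv G W y" by (rule mv_is_core[OF s])
      qed
      show ?thesis using x(3) vL vR MMy le IH W_def unfolding Phi_def by simp
    qed
  qed
qed


lemma gsum_verts: "verts (gsum (map segment ns)) = {(i, v). i < length ns \<and> 1 \<le> v \<and> v \<le> nat \<bar>ns ! i\<bar>}"
  unfolding gsum_def segment_def by auto

lemma gsum_adj: "adj (gsum (map segment ns)) (i, v) (j, w) \<longleftrightarrow>
   i = j \<and> i < length ns \<and> 1 \<le> v \<and> v \<le> nat \<bar>ns ! i\<bar> \<and> 1 \<le> w \<and> w \<le> nat \<bar>ns ! i\<bar> \<and> (w = Suc v \<or> v = Suc w)"
  unfolding gsum_def segment_def by auto

lemma gsum_blk: "i < length ns \<Longrightarrow> blk (gsum (map segment ns)) (i, v) = (if ns ! i \<ge> 0 then odd v else even v)"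
  unfolding gsum_def segment_def by auto

lemma pathG_gsum: "pathG (gsum (map segment ns))"
proof -
  let ?G = "gsum (map segment ns)"
  have "verts ?G = Sigma {..<length ns} (\<lambda>i. {1..nat \<bar>ns ! i\<bar>})" unfolding gsum_verts by auto
  then have f: "finite (verts ?G)" by simp
  have a: "adj ?G u v \<longleftrightarrow> u \<in> verts ?G \<and> v \<in> verts ?G \<and> nb u v" for u v
    by (cases u; cases v) (auto simp: gsum_adj gsum_verts nb_def)
  have b: "blk ?G u \<noteq> blk ?G v" if "u \<in> verts ?G" "v \<in> verts ?G" "nb u v" for u v
  proof -
    obtain i x j y where uv: "u = (i, x)" "v = (j, y)" by (cases u; cases v)
    have "i = j" "i < length ns" "y = Suc x \<or> x = Suc y" using that uv unfolding nb_def gsum_verts by auto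
    then show ?thesis using uv gsum_blk by auto
  qed
  show ?thesis unfolding pathG_def using f a b by blast
qed

lemma iso_gsum:
  assumes "(i, v) \<in> verts (gsum (map segment ns))" "isolated (gsum (map segment ns)) (verts (gsum (map segment ns))) (i, v)"
  shows "v = 1 \<and> nat \<bar>ns ! i\<bar> = 1"
proof (rule ccontr)
  let ?G = "gsum (map segment ns)"
  let ?N = "nat \<bar>ns ! i\<bar>"
  assume h: "\<not> (v = 1 \<and> ?N = 1)"
  have v: "i < length ns" "1 \<le> v" "v \<le> ?N" using assms(1) unfolding gsum_verts by auto
  then have N2: "2 \<le> ?N" using h by auto
  show False
  proof (cases "v < ?N")
    case True
    then have "(i, Suc v) \<in> verts ?G" "adj ?G (i, v) (i, Suc v)" using v unfolding gsum_verts gsum_adj by auto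
    then show False using assms(2) unfolding isolated_def by blast
  next
    case False
    then have "(i, v - 1) \<in> verts ?G" "adj ?G (i, v) (i, v - 1)" using v N2 unfolding gsum_verts gsum_adj by auto
    then show False using assms(2) unfolding isolated_def by blast
  qed
qed

lemma core_gsum: "core (gsum (map segment ns)) (verts (gsum (map segment ns))) =
   {(i, v). i < length ns \<and> 1 \<le> v \<and> v \<le> nat \<bar>ns ! i\<bar> \<and> 2 \<le> nat \<bar>ns ! i\<bar>}"
proof -
  let ?G = "gsum (map segment ns)"
  have "(i, v) \<in> core ?G (verts ?G) \<longleftrightarrow> i < length ns \<and> 1 \<le> v \<and> v \<le> nat \<bar>ns ! i\<bar> \<and> 2 \<le> nat \<bar>ns ! i\<bar>" for i v
  proof
    assume h: "(i, v) \<in> core ?G (verts ?G)"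
    then have m: "(i, v) \<in> verts ?G" "\<not> isolated ?G (verts ?G) (i, v)" unfolding core_def by auto
    then obtain w where w: "w \<in> verts ?G" "adj ?G (i, v) w" unfolding isolated_def by blast
    obtain j y where wy: "w = (j, y)" by (cases w)
    have "adj ?G (i, v) (j, y)" using w(2) wy by simp
    then show "i < length ns \<and> 1 \<le> v \<and> v \<le> nat \<bar>ns ! i\<bar> \<and> 2 \<le> nat \<bar>ns ! i\<bar>"
      unfolding gsum_adj by auto
  next
    assume h: "i < length ns \<and> 1 \<le> v \<and> v \<le> nat \<bar>ns ! i\<bar> \<and> 2 \<le> nat \<bar>ns ! i\<bar>"
    then have m: "(i, v) \<in> verts ?G" unfolding gsum_verts by auto
    have "\<not> isolated ?G (verts ?G) (i, v)" using iso_gsum[OF m] h by auto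
    then show "(i, v) \<in> core ?G (verts ?G)" using m unfolding core_def by auto
  qed
  then show ?thesis by auto
qed

lemma oddr_core_gsum:
  "oddr (core (gsum (map segment ns)) (verts (gsum (map segment ns))))
     \<le> card {i. i < length ns \<and> 2 \<le> nat \<bar>ns ! i\<bar> \<and> odd (nat \<bar>ns ! i\<bar>)}"
proof -
  let ?C = "core (gsum (map segment ns)) (verts (gsum (map segment ns)))"
  let ?S = "{i. i < length ns \<and> 2 \<le> nat \<bar>ns ! i\<bar> \<and> odd (nat \<bar>ns ! i\<bar>)}"
  have "{r \<in> runs ?C. even (snd (snd r) - fst (snd r))} \<subseteq> (\<lambda>i. (i, 1, nat \<bar>ns ! i\<bar>)) ` ?S"
  proof
    fix rr assume "rr \<in> {r \<in> runs ?C. even (snd (snd r) - fst (snd r))}"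
    then obtain i a b where rr: "rr = (i, a, b)" "isrun ?C i a b" "even (b - a)" unfolding runs_def by auto
    have m: "(i, a) \<in> ?C" "(i, b) \<in> ?C" using isrun_mem[OF rr(2)] by auto
    then have ia: "i < length ns" "1 \<le> a" "a \<le> nat \<bar>ns ! i\<bar>" "2 \<le> nat \<bar>ns ! i\<bar>" "b \<le> nat \<bar>ns ! i\<bar>"
      unfolding core_gsum by auto
    have "a = 1"
    proof (rule ccontr)
      assume "a \<noteq> 1"
      then have "(i, a - 1) \<in> ?C" using ia unfolding core_gsum by auto
      then show False using rr(2) ia unfolding isrun_def by auto
    qed
    moreover have "b = nat \<bar>ns ! i\<bar>"
    proof (rule ccontr)
      assume "b \<noteq> nat \<bar>ns ! i\<bar>"
      then have "(i, Suc b) \<in> ?C" using ia rr(2) unfolding core_gsum isrun_def by auto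
      then show False using rr(2) unfolding isrun_def by auto
    qed
    ultimately have "odd (nat \<bar>ns ! i\<bar>)" using rr(3) ia by auto
    then show "rr \<in> (\<lambda>i. (i, 1, nat \<bar>ns ! i\<bar>)) ` ?S" using rr ia \<open>a = 1\<close> \<open>b = nat \<bar>ns ! i\<bar>\<close> by auto
  qed
  moreover have "finite ?S" by simp
  ultimately have "card {r \<in> runs ?C. even (snd (snd r) - fst (snd r))} \<le> card ?S"
    by (meson card_image_le card_mono finite_imageI le_trans)
  then show ?thesis unfolding oddr_def .
qed

lemma credit_gsum:
  "\<bar>credit (gsum (map segment ns)) (verts (gsum (map segment ns)))\<bar> \<le> int (card {i. i < length ns \<and> nat \<bar>ns ! i\<bar> = 1})"
proof -
  let ?G = "gsum (map segment ns)"
  let ?I = "{v \<in> verts ?G. isolated ?G (verts ?G) v}"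
  let ?S = "{i. i < length ns \<and> nat \<bar>ns ! i\<bar> = 1}"
  have "?I \<subseteq> (\<lambda>i. (i, 1)) ` ?S"
  proof
    fix u assume u: "u \<in> ?I"
    obtain i v where uv: "u = (i, v)" by (cases u)
    have "v = 1 \<and> nat \<bar>ns ! i\<bar> = 1" using iso_gsum u uv by auto
    moreover have "i < length ns" using u uv unfolding gsum_verts by auto
    ultimately show "u \<in> (\<lambda>i. (i, 1)) ` ?S" using uv by auto
  qed
  moreover have fS: "finite ?S" by (rule finite_subset[of _ "{..<length ns}"]) auto
  ultimately have "card ?I \<le> card ((\<lambda>i. (i, 1::nat)) ` ?S)" by (intro card_mono) auto
  also have "\<dots> \<le> card ?S" by (rule card_image_le[OF fS])
  finally have cI: "card ?I \<le> card ?S" .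
  have fI: "finite ?I" using pathG_gsum[of ns] unfolding pathG_def by auto
  have "card {v \<in> verts ?G. isolated ?G (verts ?G) v \<and> blk ?G v} \<le> card ?I"
    using fI by (intro card_mono) auto
  moreover have "card {v \<in> verts ?G. isolated ?G (verts ?G) v \<and> \<not> blk ?G v} \<le> card ?I"
    using fI by (intro card_mono) auto
  ultimately show ?thesis unfolding credit_def using cI by linarith
qed

lemma count_odd:
  "card {i. i < length ns \<and> nat \<bar>ns ! i\<bar> = 1} + card {i. i < length ns \<and> 2 \<le> nat \<bar>ns ! i\<bar> \<and> odd (nat \<bar>ns ! i\<bar>)}
    = card {i. i < length ns \<and> odd (ns ! i)}"
proof -
  have e: "odd (nat \<bar>n\<bar>) \<longleftrightarrow> odd n" for n :: int by (simp add: even_nat_iff)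
  have "{i. i < length ns \<and> odd (ns ! i)} = {i. i < length ns \<and> nat \<bar>ns ! i\<bar> = 1} \<union> {i. i < length ns \<and> 2 \<le> nat \<bar>ns ! i\<bar> \<and> odd (nat \<bar>ns ! i\<bar>)}"
  proof (rule set_eqI)
    fix i
    have "odd (nat \<bar>ns ! i\<bar>) \<longleftrightarrow> nat \<bar>ns ! i\<bar> = 1 \<or> (2 \<le> nat \<bar>ns ! i\<bar> \<and> odd (nat \<bar>ns ! i\<bar>))"
      by (cases "nat \<bar>ns ! i\<bar>") auto
    then show "i \<in> {i. i < length ns \<and> odd (ns ! i)} \<longleftrightarrow> i \<in> {i. i < length ns \<and> nat \<bar>ns ! i\<bar> = 1} \<union> {i. i < length ns \<and> 2 \<le> nat \<bar>ns ! i\<bar> \<and> odd (nat \<bar>ns ! i\<bar>)}"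
      using e[of "ns ! i"] by auto
  qed
  moreover have "card ({i. i < length ns \<and> nat \<bar>ns ! i\<bar> = 1} \<union> {i. i < length ns \<and> 2 \<le> nat \<bar>ns ! i\<bar> \<and> odd (nat \<bar>ns ! i\<bar>)})
     = card {i. i < length ns \<and> nat \<bar>ns ! i\<bar> = 1} + card {i. i < length ns \<and> 2 \<le> nat \<bar>ns ! i\<bar> \<and> odd (nat \<bar>ns ! i\<bar>)}"
  proof (rule card_Un_disjoint)
    show "finite {i. i < length ns \<and> nat \<bar>ns ! i\<bar> = 1}" by (rule finite_subset[of _ "{..<length ns}"]) auto
    show "finite {i. i < length ns \<and> 2 \<le> nat \<bar>ns ! i\<bar> \<and> odd (nat \<bar>ns ! i\<bar>)}" by (rule finite_subset[of _ "{..<length ns}"]) auto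
    show "{i. i < length ns \<and> nat \<bar>ns ! i\<bar> = 1} \<inter> {i. i < length ns \<and> 2 \<le> nat \<bar>ns ! i\<bar> \<and> odd (nat \<bar>ns ! i\<bar>)} = {}" by auto
  qed
  ultimately show ?thesis by simp
qed

lemma MM_le4: "MM U \<le> 4" unfolding MM_def by auto

theorem mainTheorem16:
  fixes ns :: "int list" and k :: nat
  assumes "k = card {i. i < length ns \<and> odd (ns ! i)}"
  shows "- int k - 4 \<le> Rs (gsum (map segment ns))
       \<and> Rs (gsum (map segment ns)) \<le> Ls (gsum (map segment ns))
       \<and> Ls (gsum (map segment ns)) \<le> int k + 4"
proof -
  let ?G = "gsum (map segment ns)"
  let ?C = "core ?G (verts ?G)"
  have p: "pathG ?G" by (rule pathG_gsum)
  have s: "gsym ?G" and b: "gbip ?G" using pathG_sym[OF p] pathG_bip[OF p] by auto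
  have fV: "finite (verts ?G)" using p unfolding pathG_def by blast
  have Cv: "?C \<subseteq> verts ?G" by (rule core_sub)
  have fC: "finite ?C" using finite_subset[OF Cv fV] .
  have cC: "core ?G ?C = ?C" by (rule core_core[OF s])
  have cardC: "card ?C \<le> card (verts ?G)" using card_mono[OF fV Cv] .
  have gl: "gL ?G (card (verts ?G)) ?C = GL ?G ?C"
    unfolding GL_def using fuel_eq[OF fC cardC order_refl] by blast
  have gr: "gR ?G (card (verts ?G)) ?C = GR ?G ?C"
    unfolding GR_def using fuel_eq[OF fC cardC order_refl] by blast
  have Ls: "Ls ?G = credit ?G (verts ?G) + GL ?G ?C" unfolding Ls_def gl ..
  have Rs: "Rs ?G = credit ?G (verts ?G) + GR ?G ?C" unfolding Rs_def gr ..
  have mid: "GR ?G ?C \<le> GL ?G ?C" using milnor[OF s b fC cC] by blast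
  have upL: "GL ?G ?C \<le> Phi ?C" using main_bound[OF p Cv cC] .
  have pS: "pathG (swapc ?G)" by (rule pathG_swap[OF p])
  have upS: "GL (swapc ?G) ?C \<le> Phi ?C"
    using main_bound[OF pS] Cv cC by simp
  have grS: "GR ?G ?C = - GL (swapc ?G) ?C" by (rule GR_swap[OF fC])
  have ph: "Phi ?C \<le> int (card {i. i < length ns \<and> 2 \<le> nat \<bar>ns ! i\<bar> \<and> odd (nat \<bar>ns ! i\<bar>)}) + 4"
    using oddr_core_gsum[of ns] MM_le4[of ?C] unfolding Phi_def by linarith
  have cr: "\<bar>credit ?G (verts ?G)\<bar> \<le> int (card {i. i < length ns \<and> nat \<bar>ns ! i\<bar> = 1})"
    by (rule credit_gsum)
  have k: "int k = int (card {i. i < length ns \<and> nat \<bar>ns ! i\<bar> = 1}) + int (card {i. i < length ns \<and> 2 \<le> nat \<bar>ns ! i\<bar> \<and> odd (nat \<bar>ns ! i\<bar>)})"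
    using count_odd[of ns] assms by simp
  show ?thesis using Ls Rs mid upL upS grS ph cr k by (simp add: abs_le_iff)
qed

end
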